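(* Consider problem (P): $\min_{{\bf x}\in\mathbb{R}^n} f({\bf x})+\lambda\|(A{\bf x}+{\bf b})_+\|_0$. (i) Let ${\bf x}^*$ be a local minimizer of (P) such that $A_{\Gamma_*}$ has full row rank. Then ${\bf x}^*$ is a P-stationary point of (P) with $\tau$ for every $\tau$ with $0<\tau<\tau_*:=\min\{\tau_1,\tau_2\}$. (ii) If ${\bf x}^*$ is a P-stationary point of (P) with some $\tau>0$ and $f$ is convex on a neighbourhood of ${\bf x}^*$, then ${\bf x}^*$ is a local minimizer of (P). (iii) If $f$ is strongly convex with modulus $c_f>0$ (i.e. $f({\bf x})\ge f({\bf x}')+\langle\nabla f({\bf x}'),{\bf x}-{\bf x}'\rangle+\frac{c_f}{2}\|{\bf x}-{\bf x}'\|^2$ for all ${\bf x},{\bf x}'$) and ${\bf x}^*$ is a P-stationary point of (P) with some $\tau\ge\|A\|^2/c_f$, then ${\bf x}^*$ is a global minimizer of (P).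
   Context: Standing setting: $f:\mathbb{R}^n\to\mathbb{R}$ is twice continuously differentiable, $\lambda>0$, $A\in\mathbb{R}^{m\times n}$ with rows $A_i$, ${\bf b}\in\mathbb{R}^m$; ${\bf z}_+$ is the componentwise positive part, $\|{\bf z}\|_0$ the number of nonzero entries, $A_\Gamma$ the submatrix of rows indexed by $\Gamma$, $\|A\|$ the spectral norm. For $\alpha>0$, the (set-valued) proximal operator is $\mathrm{Prox}_{\alpha\|(\cdot)_+\|_0}({\bf z}):=\arg\min_{{\bf y}\in\mathbb{R}^m}\frac12\|{\bf y}-{\bf z}\|^2+\alpha\|{\bf y}_+\|_0$; componentwise its elements ${\bf p}$ satisfy $p_i=0$ if $|z_i-\sqrt{\alpha/2}|<\sqrt{\alpha/2}$, $p_i\in\{0,z_i\}$ if $|z_i-\sqrt{\alpha/2}|=\sqrt{\alpha/2}$, $p_i=z_i$ if $|z_i-\sqrt{\alpha/2}|>\sqrt{\alpha/2}$. P-stationarity: ${\bf x}^*$ is a P-stationary point of (P) with $\tau>0$ if there exists ${\bf z}^*\in\mathbb{R}^m$ with $\nabla f({\bf x}^* )+A^\top{\bf z}^*=0$ and $A{\bf x}^*+{\bf b}\in\mathrm{Prox}_{\tau\lambda\|(\cdot)_+\|_0}(A{\bf x}^*+{\bf b}+\tau{\bf z}^* )$. For ${\bf x}^*$: ${\bf y}^*:=A{\bf x}^*+{\bf b}$, $\Gamma_*:=\{i: y^*_i=0\}$; when $A_{\Gamma_*}$ has full row rank, ${\bf p}^*:=-(A_{\Gamma_*}A_{\Gamma_*}^\top)^{-1}A_{\Gamma_*}\nabla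 f({\bf x}^* )\in\mathbb{R}^{|\Gamma_*|}$. Define $\tau_1:=+\infty$ if ${\bf y}^*\le 0$, otherwise $\tau_1:=\min\{(y_i^* )^2/(2\lambda): y_i^*>0\}$; and $\tau_2:=+\infty$ if $\Gamma_*=\emptyset$ or ${\bf p}^*=0$, otherwise $\tau_2:=2\lambda/\max_i|p^*_i|^2$. *)

theory Defs
  imports "HOL-Analysis.Analysis"
begin

definition pos0 :: "real^'m \<Rightarrow> nat" where
  "pos0 z = card {i. z $ i > 0}"

definition Prox :: "real \<Rightarrow> real^'m \<Rightarrow> (real^'m) set" where
  "Prox \<alpha> z = {p. \<forall>y. (1/2) * (norm (p - z))\<^sup>2 + \<alpha> * real (pos0 p)
                     \<le> (1/2) * (norm (y - z))\<^sup>2 + \<alpha> * real (pos0 y)}"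

definition objP :: "(real^'n \<Rightarrow> real) \<Rightarrow> real \<Rightarrow> real^'n^'m \<Rightarrow> real^'m \<Rightarrow> real^'n \<Rightarrow> real" where
  "objP f lam A b x = f x + lam * real (pos0 (A *v x + b))"

text \<open>P-stationarity with parameter tau; g is the gradient of f.\<close>
definition Pstat :: "(real^'n \<Rightarrow> real^'n) \<Rightarrow> real \<Rightarrow> real^'n^'m \<Rightarrow> real^'m \<Rightarrow> real \<Rightarrow> real^'n \<Rightarrow> bool" where
  "Pstat g lam A b \<tau> x \<longleftrightarrow> (\<exists>z. g x + transpose A *v z = 0 \<and>
       A *v x + b \<in> Prox (\<tau> * lam) (A *v x + b + \<tau> *\<^sub>R z))"

definition local_minimizer :: "('a::metric_space \<Rightarrow> real) \<Rightarrow> 'a \<Rightarrow> bool" where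
  "local_minimizer F x \<longleftrightarrow> (\<exists>\<delta>>0. \<forall>y. dist y x < \<delta> \<longrightarrow> F x \<le> F y)"

definition global_minimizer :: "('a \<Rightarrow> real) \<Rightarrow> 'a \<Rightarrow> bool" where
  "global_minimizer F x \<longleftrightarrow> (\<forall>y. F x \<le> F y)"

definition Gam :: "real^'n^'m \<Rightarrow> real^'m \<Rightarrow> real^'n \<Rightarrow> 'm set" where
  "Gam A b x = {i. (A *v x + b) $ i = 0}"

definition full_row_rank_on :: "real^'n^'m \<Rightarrow> 'm set \<Rightarrow> bool" where
  "full_row_rank_on A \<Gamma> \<longleftrightarrow> inj_on (\<lambda>i. A $ i) \<Gamma> \<and> independent ((\<lambda>i. A $ i) ` \<Gamma>)"

text \<open>p* = -(A_G A_G^T)^{-1} A_G grad f(x*), an element of R^Gamma, stored as a vector in R^m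
  that vanishes outside Gamma; characterised as the unique solution of A_G A_G^T p = - A_G grad f(x*).\<close>
definition pstar :: "(real^'n \<Rightarrow> real^'n) \<Rightarrow> real^'n^'m \<Rightarrow> real^'m \<Rightarrow> real^'n \<Rightarrow> real^'m" where
  "pstar g A b x = (THE p. (\<forall>i. i \<notin> Gam A b x \<longrightarrow> p $ i = 0) \<and>
      (\<forall>i\<in>Gam A b x. (\<Sum>j\<in>Gam A b x. (A $ i \<bullet> A $ j) * p $ j) = - (A $ i \<bullet> g x)))"

definition tau1 :: "real \<Rightarrow> real^'n^'m \<Rightarrow> real^'m \<Rightarrow> real^'n \<Rightarrow> ereal" where
  "tau1 lam A b x = (let y = A *v x + b in
     if (\<forall>i. y $ i \<le> 0) then \<infinity>
     else ereal (Min {(y $ i)\<^sup>2 / (2 * lam) | i. y $ i > 0}))"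

definition tau2 :: "(real^'n \<Rightarrow> real^'n) \<Rightarrow> real \<Rightarrow> real^'n^'m \<Rightarrow> real^'m \<Rightarrow> real^'n \<Rightarrow> ereal" where
  "tau2 g lam A b x = (let p = pstar g A b x in
     if Gam A b x = {} \<or> p = 0 then \<infinity>
     else ereal (2 * lam / (Max {\<bar>p $ i\<bar> | i. i \<in> Gam A b x})\<^sup>2))"

end

theory Submission
  imports Defs
begin


lemma dir_deriv:
  fixes f :: "real^'n \<Rightarrow> real"
  assumes "(f has_derivative (\<lambda>h. G \<bullet> h)) (at x)"
  shows "((\<lambda>t. f (x + t *\<^sub>R d)) has_real_derivative (G \<bullet> d)) (at 0)"
proof -
  have l: "((\<lambda>t::real. x + t *\<^sub>R d) has_derivative (\<lambda>t. t *\<^sub>R d)) (at 0)"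
    by (auto intro!: derivative_eq_intros)
  have "((\<lambda>t. f (x + t *\<^sub>R d)) has_derivative (\<lambda>h. G \<bullet> (h *\<^sub>R d))) (at 0)"
    using diff_chain_at[OF l, of f "\<lambda>h. G \<bullet> h"] assms by (simp add: o_def)
  moreover have "(\<lambda>h. G \<bullet> (h *\<^sub>R d)) = (*) (G \<bullet> d)" by (rule ext) simp
  ultimately show ?thesis unfolding has_field_derivative_def by simp
qed

lemma conv_tangent:
  fixes f :: "real^'n \<Rightarrow> real"
  assumes der: "(f has_derivative (\<lambda>h. G \<bullet> h)) (at x0)" and cv: "convex_on S f"
    and x0: "x0 \<in> S" and x: "x \<in> S"
  shows "f x \<ge> f x0 + G \<bullet> (x - x0)"
proof (rule ccontr)
  assume "\<not> ?thesis"
  then have lt: "G \<bullet> (x - x0) - (f x - f x0) > 0" by simp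
  define d where "d = x - x0"
  define \<phi> where "\<phi> = (\<lambda>t. f (x0 + t *\<^sub>R d) - t * (f x - f x0))"
  have "(\<phi> has_real_derivative (G \<bullet> d - (f x - f x0))) (at 0)"
    unfolding \<phi>_def using dir_deriv[OF der, of d]
    by (auto intro!: derivative_eq_intros)
  from DERIV_pos_inc_right[OF this] lt obtain e where e: "e > 0"
    and he: "\<And>h. h > 0 \<Longrightarrow> h < e \<Longrightarrow> \<phi> 0 < \<phi> (0 + h)" unfolding d_def by blast
  define h where "h = min (e/2) (1/2)"
  have h0: "h > 0" "h < e" "h \<le> 1" using e by (auto simp: h_def)
  have "\<phi> 0 < \<phi> h" using he[OF h0(1,2)] by simp
  moreover have "x0 + h *\<^sub>R d = (1 - h) *\<^sub>R x0 + h *\<^sub>R x"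
    unfolding d_def by (simp add: algebra_simps)
  then have "f (x0 + h *\<^sub>R d) \<le> (1 - h) * f x0 + h * f x"
    using convex_onD[OF cv, of h x0 x] h0 x0 x by simp
  then have "\<phi> h \<le> \<phi> 0" unfolding \<phi>_def by (simp add: algebra_simps)
  ultimately show False by simp
qed

lemma small_pos:
  fixes a c :: real
  assumes "\<And>s. 0 < s \<Longrightarrow> s \<le> 1 \<Longrightarrow> a \<le> s * c"
  shows "a \<le> 0"
proof (rule ccontr)
  assume "\<not> a \<le> 0"
  then have a: "a > 0" by simp
  have "a \<le> c" using assms[of 1] by simp
  with a have c: "c > 0" by simp
  define s where "s = min 1 (a / (2 * c))"
  have s: "0 < s" "s \<le> 1" using a c by (auto simp: s_def)
  have "s * c \<le> a / (2 * c) * c" using c by (intro mult_right_mono) (auto simp: s_def)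
  also have "\<dots> = a / 2" using c by simp
  finally show False using assms[OF s] a by simp
qed

lemma cont_comp_eventually:
  fixes A :: "real^'n^'m"
  shows "((\<lambda>x. (A *v x + b) $ i) \<longlongrightarrow> (A *v x0 + b) $ i) (at x0)"
proof -
  have e: "\<And>x. (A *v x + b) $ i = A $ i \<bullet> x + b $ i"
    by (simp add: matrix_vector_mult_def inner_vec_def mult.commute)
  show ?thesis unfolding e by (intro tendsto_intros)
qed

lemma near_signs:
  fixes A :: "real^'n^'m"
  shows "eventually (\<lambda>x. \<forall>i. ((A *v x0 + b) $ i > 0 \<longrightarrow> (A *v x + b) $ i > 0)
      \<and> ((A *v x0 + b) $ i < 0 \<longrightarrow> (A *v x + b) $ i < 0)) (at x0)"
proof -
  have "\<forall>i\<in>UNIV. eventually (\<lambda>x. ((A *v x0 + b) $ i > 0 \<longrightarrow> (A *v x + b) $ i > 0)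
      \<and> ((A *v x0 + b) $ i < 0 \<longrightarrow> (A *v x + b) $ i < 0)) (at x0)"
  proof
    fix i
    have t: "((\<lambda>x. (A *v x + b) $ i) \<longlongrightarrow> (A *v x0 + b) $ i) (at x0)"
      by (rule cont_comp_eventually)
    show "eventually (\<lambda>x. ((A *v x0 + b) $ i > 0 \<longrightarrow> (A *v x + b) $ i > 0)
      \<and> ((A *v x0 + b) $ i < 0 \<longrightarrow> (A *v x + b) $ i < 0)) (at x0)"
    proof (cases "(A *v x0 + b) $ i" "0::real" rule: linorder_cases)
      case less
      show ?thesis using order_tendstoD(2)[OF t less] less by (auto elim: eventually_mono)
    next
      case equal
      then show ?thesis by simp
    next
      case greater
      show ?thesis using order_tendstoD(1)[OF t greater] greater by (auto elim: eventually_mono)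
    qed
  qed
  then show ?thesis by (intro eventually_all_finite) auto
qed

lemma aux_lin: "(1/2) * a + c \<le> (1/2) * (p - 2 * q + a) + c \<Longrightarrow> q \<le> (1/2) * (p::real)"
  by (simp add: algebra_simps)

lemma card_pos_le:
  fixes y u :: "real^'m"
  assumes "\<forall>i. y $ i > 0 \<longrightarrow> (y + u) $ i > 0"
  shows "pos0 y \<le> pos0 (y + u)"
  unfolding pos0_def using assms by (intro card_mono) auto

lemma part2:
  fixes f :: "real^'n \<Rightarrow> real" and g :: "real^'n \<Rightarrow> real^'n"
    and lam :: real and A :: "real^'n^'m" and b :: "real^'m"
  assumes grad: "\<And>x. (f has_derivative (\<lambda>h. g x \<bullet> h)) (at x)"
    and lam: "lam > 0" and tau: "\<tau> > 0" and ps: "Pstat g lam A b \<tau> xs"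
    and dl: "\<delta> > 0" and cv: "convex_on (ball xs \<delta>) f"
  shows "local_minimizer (objP f lam A b) xs"
proof -
  obtain z where gz: "g xs + transpose A *v z = 0"
    and pr: "A *v xs + b \<in> Prox (\<tau> * lam) (A *v xs + b + \<tau> *\<^sub>R z)"
    using ps unfolding Pstat_def by blast
  define y where "y = A *v xs + b"
  have ev1: "eventually (\<lambda>x. \<forall>i. (y $ i > 0 \<longrightarrow> (A *v x + b) $ i > 0)
      \<and> (y $ i < 0 \<longrightarrow> (A *v x + b) $ i < 0)) (at xs)"
    unfolding y_def by (rule near_signs)
  have lz: "\<And>x. z \<bullet> (A *v (x - xs)) = (z v* A) \<bullet> x - (z v* A) \<bullet> xs"
    by (simp add: dot_lmul_matrix[symmetric] inner_diff_right)
  have "((\<lambda>x. z \<bullet> (A *v (x - xs))) \<longlongrightarrow> 0) (at xs)"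
  proof -
    have "((\<lambda>x. (z v* A) \<bullet> x - (z v* A) \<bullet> xs) \<longlongrightarrow> (z v* A) \<bullet> xs - (z v* A) \<bullet> xs) (at xs)"
      by (intro tendsto_intros)
    then show ?thesis unfolding lz by simp
  qed
  note t = this
  have "eventually (\<lambda>x. z \<bullet> (A *v (x - xs)) < lam) (at xs)" by (rule order_tendstoD(2)[OF t lam])
  moreover have "eventually (\<lambda>x. z \<bullet> (A *v (x - xs)) > - lam) (at xs)"
    by (rule order_tendstoD(1)[OF t]) (use lam in simp)
  ultimately have ev2: "eventually (\<lambda>x. \<bar>z \<bullet> (A *v (x - xs))\<bar> < lam) (at xs)"
    by (rule eventually_elim2) (simp add: abs_less_iff)
  have "eventually (\<lambda>x. (\<forall>i. (y $ i > 0 \<longrightarrow> (A *v x + b) $ i > 0)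
      \<and> (y $ i < 0 \<longrightarrow> (A *v x + b) $ i < 0)) \<and> \<bar>z \<bullet> (A *v (x - xs))\<bar> < lam) (at xs)"
    using ev1 ev2 by (rule eventually_conj)
  then obtain e where e: "e > 0" and he: "\<And>x. x \<noteq> xs \<Longrightarrow> dist x xs < e \<Longrightarrow>
      (\<forall>i. (y $ i > 0 \<longrightarrow> (A *v x + b) $ i > 0) \<and> (y $ i < 0 \<longrightarrow> (A *v x + b) $ i < 0))
      \<and> \<bar>z \<bullet> (A *v (x - xs))\<bar> < lam"
    unfolding eventually_at by blast
  show ?thesis unfolding local_minimizer_def
  proof (intro exI[of _ "min e \<delta>"] conjI allI impI)
    show "min e \<delta> > 0" using e dl by simp
    fix x assume dx: "dist x xs < min e \<delta>"
    show "objP f lam A b xs \<le> objP f lam A b x"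
    proof (cases "x = xs")
      case True then show ?thesis by simp
    next
      case False
      with he dx have sg: "\<forall>i. (y $ i > 0 \<longrightarrow> (A *v x + b) $ i > 0) \<and> (y $ i < 0 \<longrightarrow> (A *v x + b) $ i < 0)"
        and zl: "\<bar>z \<bullet> (A *v (x - xs))\<bar> < lam" by auto
      define d where "d = x - xs"
      define u where "u = A *v d"
      have yx: "A *v x + b = y + u" unfolding y_def u_def d_def by (simp add: algebra_simps)
      have xb: "x \<in> ball xs \<delta>" using dx by (simp add: dist_commute)
      have "f x \<ge> f xs + g xs \<bullet> (x - xs)"
        by (rule conv_tangent[OF grad cv]) (use dl xb in auto)
      moreover have "g xs \<bullet> d = - (z \<bullet> u)"
      proof -
        have "g xs = - (transpose A *v z)" using gz by (simp add: eq_neg_iff_add_eq_0)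
        then show ?thesis unfolding u_def by (simp add: dot_lmul_matrix)
      qed
      ultimately have fx: "f x \<ge> f xs - z \<bullet> u" unfolding d_def by simp
      have sg': "\<forall>i. (y $ i > 0 \<longrightarrow> (y + u) $ i > 0) \<and> (y $ i < 0 \<longrightarrow> (y + u) $ i < 0)"
        using sg unfolding yx .
      have P01: "pos0 y \<le> pos0 (y + u)" using sg' by (intro card_pos_le) auto
      have zu: "z \<bullet> u \<le> lam * (real (pos0 (y + u)) - real (pos0 y))"
      proof (cases "pos0 y < pos0 (y + u)")
        case True
        then have "real (pos0 (y + u)) - real (pos0 y) \<ge> 1" by linarith
        then have "lam \<le> lam * (real (pos0 (y + u)) - real (pos0 y))" using lam
          by (metis mult.right_neutral mult_left_mono less_imp_le)
        moreover have "z \<bullet> u < lam" using zl unfolding u_def d_def by linarith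
        ultimately show ?thesis by linarith
      next
        case False
        with P01 have eq: "pos0 (y + u) = pos0 y" by simp
        have "\<tau> * (z \<bullet> u) \<le> 0"
        proof (rule small_pos[where c = "(1/2) * (u \<bullet> u)"])
          fix s :: real assume s: "0 < s" "s \<le> 1"
          have same: "pos0 (y + s *\<^sub>R u) = pos0 (y + u)"
          proof -
            have "{i. (y + s *\<^sub>R u) $ i > 0} = {i. (y + u) $ i > 0}"
            proof (intro Collect_cong)
              fix i
              consider "y $ i > 0" | "y $ i < 0" | "y $ i = 0" by linarith
              then show "((y + s *\<^sub>R u) $ i > 0) = ((y + u) $ i > 0)"
              proof cases
                case 1
                then have "(y + u) $ i > 0" using sg' by blast
                moreover have "(y + s *\<^sub>R u) $ i = (1 - s) * y $ i + s * (y + u) $ i"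
                  by (simp add: algebra_simps)
                moreover have "(1 - s) * y $ i \<ge> 0" using 1 s by simp
                moreover have "s * (y + u) $ i > 0" using s calculation(1) by simp
                ultimately show ?thesis by linarith
              next
                case 2
                then have "(y + u) $ i < 0" using sg' by blast
                moreover have "(y + s *\<^sub>R u) $ i = (1 - s) * y $ i + s * (y + u) $ i"
                  by (simp add: algebra_simps)
                moreover have "(1 - s) * y $ i \<le> 0" using 2 s by (simp add: mult_nonneg_nonpos)
                moreover have "s * (y + u) $ i < 0" using s calculation(1) by (simp add: mult_pos_neg)
                ultimately show ?thesis by linarith
              next
                case 3
                then show ?thesis using s by (simp add: zero_less_mult_iff)
              qed
            qed
            then show ?thesis unfolding pos0_def by simp
          qed
          have h1: "(1/2) * (norm (y - (y + \<tau> *\<^sub>R z)))\<^sup>2 + \<tau> * lam * real (pos0 y)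
              \<le> (1/2) * (norm ((y + s *\<^sub>R u) - (y + \<tau> *\<^sub>R z)))\<^sup>2 + \<tau> * lam * real (pos0 (y + s *\<^sub>R u))"
            using pr unfolding Prox_def y_def by blast
          have h2: "(norm (y - (y + \<tau> *\<^sub>R z)))\<^sup>2 = \<tau>^2 * (z \<bullet> z)"
            by (simp only: power2_norm_eq_inner) (simp add: algebra_simps power2_eq_square)
          have h3: "(norm ((y + s *\<^sub>R u) - (y + \<tau> *\<^sub>R z)))\<^sup>2
              = s^2 * (u \<bullet> u) - 2 * (s * \<tau> * (z \<bullet> u)) + \<tau>^2 * (z \<bullet> z)"
            by (simp only: power2_norm_eq_inner) (simp add: power2_eq_square inner_diff_left inner_diff_right inner_commute algebra_simps)
          have "s * \<tau> * (z \<bullet> u) \<le> (1/2) * (s^2 * (u \<bullet> u))"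
            using h1 unfolding h2 h3 same eq by (rule aux_lin)
          then have "s * (\<tau> * (z \<bullet> u)) \<le> s * (s * ((1/2) * (u \<bullet> u)))"
            by (simp add: power2_eq_square mult.assoc)
          then show "\<tau> * (z \<bullet> u) \<le> s * ((1/2) * (u \<bullet> u))" using s by simp
        qed
        then have "z \<bullet> u \<le> 0" using tau by (simp add: mult_le_0_iff)
        then show ?thesis using eq by simp
      qed
      have "f xs + lam * real (pos0 y) \<le> f x + lam * real (pos0 (y + u))"
        using fx zu by (simp add: algebra_simps)
      then show ?thesis unfolding objP_def yx y_def by simp
    qed
  qed
qed



lemma transp_inner:
  fixes A :: "real^'n^'m"
  shows "(transpose A *v z) \<bullet> d = z \<bullet> (A *v d)"
  by (simp add: dot_lmul_matrix)

lemma part3: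
  fixes f :: "real^'n \<Rightarrow> real" and g :: "real^'n \<Rightarrow> real^'n"
    and lam :: real and A :: "real^'n^'m" and b :: "real^'m"
  assumes lam: "lam > 0" and cf: "cf > 0"
    and sc: "\<forall>x x'. f x \<ge> f x' + g x' \<bullet> (x - x') + cf / 2 * (norm (x - x'))\<^sup>2"
    and tau: "\<tau> \<ge> (onorm (\<lambda>x. A *v x))\<^sup>2 / cf" and ps: "Pstat g lam A b \<tau> xs"
  shows "global_minimizer (objP f lam A b) xs"
  unfolding global_minimizer_def
proof
  fix x
  obtain z where gz: "g xs + transpose A *v z = 0"
    and pr: "A *v xs + b \<in> Prox (\<tau> * lam) (A *v xs + b + \<tau> *\<^sub>R z)"
    using ps unfolding Pstat_def by blast
  define y where "y = A *v xs + b"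
  define d where "d = x - xs"
  define u where "u = A *v d"
  have yx: "A *v x + b = y + u" unfolding y_def u_def d_def by (simp add: algebra_simps)
  define P0 where "P0 = real (pos0 y)"
  define P1 where "P1 = real (pos0 (y + u))"
  have h1: "(1/2) * (norm (y - (y + \<tau> *\<^sub>R z)))\<^sup>2 + \<tau> * lam * P0
      \<le> (1/2) * (norm ((y + u) - (y + \<tau> *\<^sub>R z)))\<^sup>2 + \<tau> * lam * P1"
    using pr unfolding Prox_def y_def P0_def P1_def by blast
  have h2: "(norm (y - (y + \<tau> *\<^sub>R z)))\<^sup>2 = \<tau>^2 * (z \<bullet> z)"
    by (simp only: power2_norm_eq_inner) (simp add: algebra_simps power2_eq_square)
  have h3: "(norm ((y + u) - (y + \<tau> *\<^sub>R z)))\<^sup>2 = u \<bullet> u - 2 * \<tau> * (z \<bullet> u) + \<tau>^2 * (z \<bullet> z)"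
    by (simp only: power2_norm_eq_inner) (simp add: power2_eq_square inner_diff_left inner_diff_right inner_commute algebra_simps)
  have key: "\<tau> * lam * P0 \<le> (1/2) * (u \<bullet> u) - \<tau> * (z \<bullet> u) + \<tau> * lam * P1"
    using h1 unfolding h2 h3 by (simp add: algebra_simps)
  have gd: "g xs \<bullet> d = - (z \<bullet> u)"
  proof -
    have "g xs = - (transpose A *v z)" using gz by (simp add: eq_neg_iff_add_eq_0)
    then show ?thesis unfolding u_def by (simp add: dot_lmul_matrix)
  qed
  have fx: "f x \<ge> f xs - (z \<bullet> u) + cf / 2 * (norm d)\<^sup>2"
    using sc gd unfolding d_def by (metis add_uminus_conv_diff)
  have nu: "norm u \<le> onorm (\<lambda>x. A *v x) * norm d"
    unfolding u_def by (rule onorm) simp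
  have on0: "onorm (\<lambda>x. A *v x) \<ge> 0" by (rule onorm_pos_le) simp
  have uu: "u \<bullet> u \<le> (onorm (\<lambda>x. A *v x))\<^sup>2 * (norm d)\<^sup>2"
  proof -
    have "u \<bullet> u = (norm u)\<^sup>2" by (simp add: power2_norm_eq_inner)
    also have "\<dots> \<le> (onorm (\<lambda>x. A *v x) * norm d)\<^sup>2"
      using nu by (simp add: power_mono)
    finally show ?thesis by (simp add: power_mult_distrib)
  qed
  have o2: "(onorm (\<lambda>x. A *v x))\<^sup>2 \<le> \<tau> * cf" using tau cf by (simp add: divide_le_eq)
  have uu2: "u \<bullet> u \<le> \<tau> * cf * (norm d)\<^sup>2"
    using uu o2 by (meson mult_right_mono order_trans zero_le_power2)
  show "objP f lam A b xs \<le> objP f lam A b x"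
  proof (cases "\<tau> > 0")
    case True
    have a1: "(1/2) * (u \<bullet> u) \<le> \<tau> * (cf / 2 * (norm d)\<^sup>2)" using uu2 by simp
    have a2: "\<tau> * (f xs - (z \<bullet> u) + cf / 2 * (norm d)\<^sup>2) \<le> \<tau> * f x"
      using fx True by (simp add: mult_left_mono)
    have "\<tau> * (f xs + lam * P0) = \<tau> * f xs + \<tau> * lam * P0" by (simp add: algebra_simps)
    also have "\<dots> \<le> \<tau> * f xs + ((1/2) * (u \<bullet> u) - \<tau> * (z \<bullet> u) + \<tau> * lam * P1)"
      using key by linarith
    also have "\<dots> \<le> \<tau> * f xs + (\<tau> * (cf / 2 * (norm d)\<^sup>2) - \<tau> * (z \<bullet> u) + \<tau> * lam * P1)"
      using a1 by linarith
    also have "\<dots> = \<tau> * (f xs - (z \<bullet> u) + cf / 2 * (norm d)\<^sup>2) + \<tau> * lam * P1"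
      by (simp add: algebra_simps)
    also have "\<dots> \<le> \<tau> * f x + \<tau> * lam * P1" using a2 by linarith
    also have "\<dots> = \<tau> * (f x + lam * P1)" by (simp add: algebra_simps)
    finally have "\<tau> * (f xs + lam * P0) \<le> \<tau> * (f x + lam * P1)" .
    then have "f xs + lam * P0 \<le> f x + lam * P1" using True by simp
    then show ?thesis unfolding objP_def P0_def P1_def y_def yx by (simp add: y_def)
  next
    case False
    have "\<tau> \<ge> 0" using tau cf by (meson divide_nonneg_pos zero_le_power2 order_trans)
    with False have "\<tau> = 0" by simp
    then have "u \<bullet> u \<le> 0" using uu2 by simp
    then have u0: "u = 0" by (metis inner_eq_zero_iff inner_ge_zero order_antisym)
    have "cf / 2 * (norm d)\<^sup>2 \<ge> 0" using cf by simp
    then have "f x \<ge> f xs" using fx u0 by simp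
    then show ?thesis unfolding objP_def yx u0 by (simp add: y_def)
  qed
qed


lemma norm2_sum: "(norm (v::real^'m))\<^sup>2 = (\<Sum>i\<in>UNIV. (v $ i)\<^sup>2)"
  by (simp only: power2_norm_eq_inner) (simp add: inner_vec_def power2_eq_square)

lemma pos0_sum: "real (pos0 (v::real^'m)) = (\<Sum>i\<in>UNIV. if v $ i > 0 then 1 else 0)"
proof -
  have "pos0 v = card {i\<in>UNIV. v $ i > 0}" unfolding pos0_def by simp
  also have "\<dots> = (\<Sum>i\<in>{i\<in>UNIV. v $ i > 0}. 1)" by simp
  finally have "real (pos0 v) = (\<Sum>i\<in>{i\<in>UNIV. v $ i > 0}. 1::real)" by simp
  also have "\<dots> = (\<Sum>i\<in>UNIV. if v $ i > 0 then 1 else 0)"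
    by (rule sum.inter_filter) simp
  finally show ?thesis .
qed

lemma prox_suff:
  fixes p w :: "real^'m"
  assumes "\<And>i s. (1/2) * (p $ i - w $ i)\<^sup>2 + \<alpha> * (if p $ i > 0 then 1 else 0)
     \<le> (1/2) * (s - w $ i)\<^sup>2 + \<alpha> * (if s > 0 then 1 else 0)"
  shows "p \<in> Prox \<alpha> w"
  unfolding Prox_def
proof (intro CollectI allI)
  fix y :: "real^'m"
  have e: "\<And>v::real^'m. (1/2) * (norm (v - w))\<^sup>2 + \<alpha> * real (pos0 v)
     = (\<Sum>i\<in>UNIV. (1/2) * (v $ i - w $ i)\<^sup>2 + \<alpha> * (if v $ i > 0 then 1 else 0))"
    by (simp add: norm2_sum pos0_sum sum_distrib_left sum.distrib)
  show "(1/2) * (norm (p - w))\<^sup>2 + \<alpha> * real (pos0 p) \<le> (1/2) * (norm (y - w))\<^sup>2 + \<alpha> * real (pos0 y)"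
    unfolding e by (rule sum_mono) (rule assms)
qed

lemma coord_ok:
  fixes y m \<tau> lam s :: real
  assumes tau: "\<tau> > 0" and lam: "lam > 0"
    and c: "(y < 0 \<and> m = 0) \<or> (y > 0 \<and> m = 0 \<and> \<tau> * lam \<le> y\<^sup>2 / 2) \<or> (y = 0 \<and> m \<ge> 0 \<and> \<tau> * m\<^sup>2 \<le> 2 * lam)"
  shows "(1/2) * (y - (y + \<tau> * m))\<^sup>2 + \<tau> * lam * (if y > 0 then 1 else 0)
     \<le> (1/2) * (s - (y + \<tau> * m))\<^sup>2 + \<tau> * lam * (if s > 0 then 1 else 0)"
proof -
  have tl: "\<tau> * lam > 0" using tau lam by simp
  consider "y < 0 \<and> m = 0" | "y > 0 \<and> m = 0 \<and> \<tau> * lam \<le> y\<^sup>2 / 2" | "y = 0 \<and> m \<ge> 0 \<and> \<tau> * m\<^sup>2 \<le> 2 * lam"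
    using c by blast
  then show ?thesis
  proof cases
    case 1 then show ?thesis using tl by simp
  next
    case 2
    show ?thesis
    proof (cases "s > 0")
      case True then show ?thesis using 2 by simp
    next
      case False
      have "y\<^sup>2 \<le> (y - s)\<^sup>2" using 2 False
        by (intro power_mono) auto
      then have "y\<^sup>2 \<le> (s - y)\<^sup>2" by (simp add: power2_commute)
      then show ?thesis using 2 False by (simp add: power2_commute)
    qed
  next
    case 3
    have tm: "\<tau> * m \<ge> 0" using 3 tau by simp
    show ?thesis
    proof (cases "s > 0")
      case True
      have "(\<tau> * m)\<^sup>2 = \<tau> * (\<tau> * m\<^sup>2)" by (simp add: power2_eq_square)
      also have "\<dots> \<le> \<tau> * (2 * lam)" using 3 tau by (intro mult_left_mono) auto
      finally have "(\<tau> * m)\<^sup>2 \<le> \<tau> * lam * 2" by simp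
      then show ?thesis using 3 True by simp (smt (verit) zero_le_power2)
    next
      case False
      have "(\<tau> * m)\<^sup>2 \<le> (s - (\<tau> * m))\<^sup>2" 
      proof -
        have "(\<tau> * m)\<^sup>2 \<le> (\<tau> * m - s)\<^sup>2" using tm False by (intro power_mono) auto
        then show ?thesis by (simp add: power2_commute)
      qed
      then show ?thesis using 3 False by simp
    qed
  qed
qed



lemma dir_nonneg:
  fixes f :: "real^'n \<Rightarrow> real" and g :: "real^'n \<Rightarrow> real^'n"
    and lam :: real and A :: "real^'n^'m" and b :: "real^'m"
  assumes grad: "(f has_derivative (\<lambda>h. g xs \<bullet> h)) (at xs)"
    and lm: "local_minimizer (objP f lam A b) xs" and lam: "lam > 0"
    and dG: "\<And>i. (A *v xs + b) $ i = 0 \<Longrightarrow> A $ i \<bullet> d \<le> 0"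
  shows "g xs \<bullet> d \<ge> 0"
proof (rule ccontr)
  assume "\<not> ?thesis"
  then have neg: "g xs \<bullet> d < 0" by simp
  then have d0: "d \<noteq> 0" by auto
  define y where "y = A *v xs + b"
  obtain \<delta> where dl: "\<delta> > 0" and hd: "\<And>x. dist x xs < \<delta> \<Longrightarrow> objP f lam A b xs \<le> objP f lam A b x"
    using lm unfolding local_minimizer_def by blast
  obtain e where e: "e > 0" and he: "\<And>x. x \<noteq> xs \<Longrightarrow> dist x xs < e \<Longrightarrow>
      (\<forall>i. (y $ i > 0 \<longrightarrow> (A *v x + b) $ i > 0) \<and> (y $ i < 0 \<longrightarrow> (A *v x + b) $ i < 0))"
    using near_signs[of A xs b] unfolding eventually_at y_def by blast
  obtain e2 where e2: "e2 > 0" and he2: "\<And>h. h > 0 \<Longrightarrow> h < e2 \<Longrightarrow> f (xs + (0 + h) *\<^sub>R d) < f (xs + 0 *\<^sub>R d)"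
    using DERIV_neg_dec_right[OF dir_deriv[OF grad, of d] neg] by blast
  have nd: "norm d > 0" using d0 by simp
  define h where "h = min (e2/2) (min \<delta> e / (2 * norm d))"
  have h0: "h > 0" "h < e2" using e2 dl e nd by (auto simp: h_def)
  have "h * norm d \<le> min \<delta> e / (2 * norm d) * norm d" using nd
    by (intro mult_right_mono) (auto simp: h_def)
  also have "\<dots> = min \<delta> e / 2" using nd by simp
  also have "\<dots> < min \<delta> e" using dl e by (simp add: min_def)
  finally have hn: "h * norm d < min \<delta> e" .
  define x where "x = xs + h *\<^sub>R d"
  have dx: "dist x xs = h * norm d" using h0 by (simp add: x_def dist_norm)
  have xne: "x \<noteq> xs" using h0 d0 by (simp add: x_def)
  have fl: "f x < f xs" using he2[OF h0] by (simp add: x_def)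
  have yx: "A *v x + b = y + h *\<^sub>R (A *v d)" by (simp add: x_def y_def algebra_simps)
  have sg: "\<forall>i. (y $ i < 0 \<longrightarrow> (A *v x + b) $ i < 0)" using he[OF xne] dx hn by auto
  have "{i. (A *v x + b) $ i > 0} \<subseteq> {i. y $ i > 0}"
  proof
    fix i assume i: "i \<in> {i. (A *v x + b) $ i > 0}"
    consider "y $ i < 0" | "y $ i = 0" | "y $ i > 0" by linarith
    then show "i \<in> {i. y $ i > 0}"
    proof cases
      case 1 then show ?thesis using sg i by auto
    next
      case 2
      have "(A *v d) $ i = A $ i \<bullet> d" by (simp add: matrix_vector_mult_def inner_vec_def mult.commute)
      then have "(A *v x + b) $ i = h * (A $ i \<bullet> d)" using 2 yx by simp
      moreover have "h * (A $ i \<bullet> d) \<le> 0" using dG[of i] 2 h0 unfolding y_def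
        by (simp add: mult_nonneg_nonpos)
      ultimately show ?thesis using i by simp
    qed simp
  qed
  then have "pos0 (A *v x + b) \<le> pos0 y" unfolding pos0_def by (intro card_mono) auto
  then have "lam * real (pos0 (A *v x + b)) \<le> lam * real (pos0 y)" using lam by simp
  moreover have "objP f lam A b xs \<le> objP f lam A b x" using hd dx hn by simp
  ultimately show False using fl unfolding objP_def y_def by simp
qed



lemma kkt:
  fixes A :: "real^'n^'m" and G :: "real^'n"
  assumes dirs: "\<And>d. (\<forall>i\<in>\<Gamma>. A $ i \<bullet> d \<le> 0) \<Longrightarrow> G \<bullet> d \<ge> 0"
    and fr: "full_row_rank_on A \<Gamma>"
  shows "\<exists>\<mu>::real^'m. (\<forall>i. i \<notin> \<Gamma> \<longrightarrow> \<mu> $ i = 0) \<and> (\<forall>i\<in>\<Gamma>. \<mu> $ i \<ge> 0)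
          \<and> G = - (\<Sum>j\<in>\<Gamma>. \<mu> $ j *\<^sub>R A $ j)"
proof -
  define R where "R = (\<lambda>i. A $ i)"
  define S where "S = R ` \<Gamma>"
  have inj: "inj_on R \<Gamma>" and ind: "independent S"
    using fr unfolding full_row_rank_on_def R_def S_def by auto
  have finS: "finite S" unfolding S_def by simp
  obtain p q where p: "p \<in> span S" and q: "\<And>w. w \<in> span S \<Longrightarrow> orthogonal q w" and Gpq: "G = p + q"
    using orthogonal_subspace_decomp_exists[of S G] by metis
  have qA: "\<And>i. i \<in> \<Gamma> \<Longrightarrow> A $ i \<bullet> q = 0"
  proof -
    fix i assume "i \<in> \<Gamma>"
    then have "A $ i \<in> span S" unfolding S_def R_def by (intro span_base) auto
    then show "A $ i \<bullet> q = 0" using q by (metis inner_commute orthogonal_def)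
  qed
  have "G \<bullet> q \<ge> 0" by (rule dirs) (simp add: qA)
  moreover have "G \<bullet> (- q) \<ge> 0" by (rule dirs) (simp add: qA)
  ultimately have Gq: "G \<bullet> q = 0" by simp
  have "q \<bullet> p = 0" using q[OF p] unfolding orthogonal_def .
  moreover have "G \<bullet> q = p \<bullet> q + q \<bullet> q" unfolding Gpq by (simp add: inner_add_left)
  moreover have "p \<bullet> q = q \<bullet> p" by (rule inner_commute)
  ultimately have "q \<bullet> q = 0" using Gq by simp
  then have "q = 0" by simp
  then have "G \<in> span S" using Gpq p by simp
  then obtain c where c: "G = (\<Sum>v\<in>S. c v *\<^sub>R v)" unfolding span_finite[OF finS] by blast
  also have "\<dots> = (\<Sum>j\<in>\<Gamma>. c (R j) *\<^sub>R R j)" unfolding S_def using sum.reindex[OF inj] by (simp add: o_def)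
  finally have Gc: "G = (\<Sum>j\<in>\<Gamma>. c (A $ j) *\<^sub>R A $ j)" unfolding R_def .
  define \<mu> :: "real^'m" where "\<mu> = (\<chi> j. if j \<in> \<Gamma> then - c (A $ j) else 0)"
  have Gm: "G = - (\<Sum>j\<in>\<Gamma>. \<mu> $ j *\<^sub>R A $ j)"
    unfolding Gc \<mu>_def by (simp add: sum_negf[symmetric])
  have pos: "\<forall>i\<in>\<Gamma>. \<mu> $ i \<ge> 0"
  proof
    fix i assume i: "i \<in> \<Gamma>"
    obtain p' q' where p': "p' \<in> span (S - {R i})" and q': "\<And>w. w \<in> span (S - {R i}) \<Longrightarrow> orthogonal q' w"
      and Apq: "R i = p' + q'"
      using orthogonal_subspace_decomp_exists[of "S - {R i}" "R i"] by metis
    have Ri: "R i \<in> S" using i unfolding S_def by simp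
    have nsp: "R i \<notin> span (S - {R i})" using ind Ri unfolding dependent_def by blast
    have q'0: "q' \<noteq> 0" using nsp Apq p' by auto
    have oth: "\<And>j. j \<in> \<Gamma> \<Longrightarrow> j \<noteq> i \<Longrightarrow> A $ j \<bullet> q' = 0"
    proof -
      fix j assume j: "j \<in> \<Gamma>" "j \<noteq> i"
      then have "R j \<noteq> R i" using inj i by (meson inj_on_eq_iff)
      then have "R j \<in> S - {R i}" using j unfolding S_def by auto
      then have "R j \<in> span (S - {R i})" by (rule span_base)
      then show "A $ j \<bullet> q' = 0" using q' unfolding R_def by (metis inner_commute orthogonal_def)
    qed
    have "q' \<bullet> p' = 0" using q'[OF p'] unfolding orthogonal_def .
    moreover have "A $ i \<bullet> q' = p' \<bullet> q' + q' \<bullet> q'" using Apq unfolding R_def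
      by (simp add: inner_add_left)
    moreover have "p' \<bullet> q' = q' \<bullet> p'" by (rule inner_commute)
    ultimately have Aiq: "A $ i \<bullet> q' = q' \<bullet> q'" by simp
    have qq: "q' \<bullet> q' > 0" using q'0 by simp
    have "G \<bullet> (- q') \<ge> 0"
    proof (rule dirs, intro ballI)
      fix j assume j: "j \<in> \<Gamma>"
      show "A $ j \<bullet> - q' \<le> 0"
        using oth[OF j] Aiq qq by (cases "j = i") auto
    qed
    also have "G \<bullet> (- q') = (\<Sum>j\<in>\<Gamma>. \<mu> $ j * (A $ j \<bullet> q'))"
      unfolding Gm by (simp add: inner_sum_left)
    also have "\<dots> = \<mu> $ i * (A $ i \<bullet> q') + (\<Sum>j\<in>\<Gamma> - {i}. \<mu> $ j * (A $ j \<bullet> q'))"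
      using i by (simp add: sum.remove)
    also have "(\<Sum>j\<in>\<Gamma> - {i}. \<mu> $ j * (A $ j \<bullet> q')) = 0"
      by (rule sum.neutral) (simp add: oth)
    finally have "0 \<le> \<mu> $ i * (q' \<bullet> q')" using Aiq by simp
    then show "\<mu> $ i \<ge> 0" using qq by (simp add: zero_le_mult_iff)
  qed
  have "\<forall>i. i \<notin> \<Gamma> \<longrightarrow> \<mu> $ i = 0" unfolding \<mu>_def by simp
  then show ?thesis using pos Gm by blast
qed

lemma gram_unique:
  fixes A :: "real^'n^'m"
  assumes fr: "full_row_rank_on A \<Gamma>"
    and p: "\<forall>i. i \<notin> \<Gamma> \<longrightarrow> p $ i = 0" "\<forall>i\<in>\<Gamma>. (\<Sum>j\<in>\<Gamma>. (A $ i \<bullet> A $ j) * p $ j) = c i"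
    and p': "\<forall>i. i \<notin> \<Gamma> \<longrightarrow> p' $ i = 0" "\<forall>i\<in>\<Gamma>. (\<Sum>j\<in>\<Gamma>. (A $ i \<bullet> A $ j) * p' $ j) = c i"
  shows "p = (p' :: real^'m)"
proof -
  define R where "R = (\<lambda>i. A $ i)"
  define S where "S = R ` \<Gamma>"
  have inj: "inj_on R \<Gamma>" and ind: "independent S"
    using fr unfolding full_row_rank_on_def R_def S_def by auto
  have finS: "finite S" unfolding S_def by simp
  define r where "r = p - p'"
  define v where "v = (\<Sum>j\<in>\<Gamma>. r $ j *\<^sub>R A $ j)"
  have Av: "\<And>i. i \<in> \<Gamma> \<Longrightarrow> A $ i \<bullet> v = 0"
  proof -
    fix i assume i: "i \<in> \<Gamma>"
    have "A $ i \<bullet> v = (\<Sum>j\<in>\<Gamma>. (A $ i \<bullet> A $ j) * p $ j) - (\<Sum>j\<in>\<Gamma>. (A $ i \<bullet> A $ j) * p' $ j)"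
      unfolding v_def r_def by (simp add: inner_sum_right sum_subtractf[symmetric] algebra_simps)
    then show "A $ i \<bullet> v = 0" using p(2) p'(2) i by simp
  qed
  have "v \<bullet> v = (\<Sum>j\<in>\<Gamma>. r $ j * (A $ j \<bullet> v))" by (subst (1) v_def) (simp add: inner_sum_left)
  also have "\<dots> = 0" by (simp add: Av)
  finally have v0: "v = 0" by simp
  have rz: "\<forall>j\<in>\<Gamma>. r $ j = 0"
  proof (rule ccontr)
    assume "\<not> ?thesis"
    then obtain j where j: "j \<in> \<Gamma>" "r $ j \<noteq> 0" by blast
    define u where "u = (\<lambda>w. r $ (inv_into \<Gamma> R w))"
    have "(\<Sum>w\<in>S. u w *\<^sub>R w) = (\<Sum>k\<in>\<Gamma>. u (R k) *\<^sub>R R k)"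
      unfolding S_def using sum.reindex[OF inj] by (simp add: o_def)
    also have "\<dots> = v" unfolding v_def u_def R_def
      using inj unfolding R_def by (intro sum.cong) auto
    finally have "(\<Sum>w\<in>S. u w *\<^sub>R w) = 0" using v0 by simp
    moreover have "R j \<in> S" "u (R j) \<noteq> 0" using j inj unfolding S_def u_def by auto
    ultimately have "dependent S" unfolding dependent_finite[OF finS] by blast
    with ind show False by simp
  qed
  show ?thesis
  proof (rule vec_eq_iff[THEN iffD2], intro allI)
    fix i show "p $ i = p' $ i"
      using rz p(1) p'(1) unfolding r_def by (cases "i \<in> \<Gamma>") auto
  qed
qed



lemma part1:
  fixes f :: "real^'n \<Rightarrow> real" and g :: "real^'n \<Rightarrow> real^'n"
    and lam :: real and A :: "real^'n^'m" and b :: "real^'m"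
  assumes grad: "\<And>x. (f has_derivative (\<lambda>h. g x \<bullet> h)) (at x)"
    and lam: "lam > 0" and lm: "local_minimizer (objP f lam A b) xs"
    and fr: "full_row_rank_on A (Gam A b xs)"
    and tau: "0 < \<tau>" and tt: "ereal \<tau> < min (tau1 lam A b xs) (tau2 g lam A b xs)"
  shows "Pstat g lam A b \<tau> xs"
proof -
  define \<Gamma> where "\<Gamma> = Gam A b xs"
  define y where "y = A *v xs + b"
  have G\<Gamma>: "\<And>i. i \<in> \<Gamma> \<longleftrightarrow> y $ i = 0" unfolding \<Gamma>_def Gam_def y_def by simp
  have dirs: "\<And>d. (\<forall>i\<in>\<Gamma>. A $ i \<bullet> d \<le> 0) \<Longrightarrow> g xs \<bullet> d \<ge> 0"
    by (rule dir_nonneg[where f=f and g=g and xs=xs, OF grad lm lam]) (auto simp: G\<Gamma> y_def)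
  obtain \<mu> :: "real^'m" where m0: "\<forall>i. i \<notin> \<Gamma> \<longrightarrow> \<mu> $ i = 0" and mpos: "\<forall>i\<in>\<Gamma>. \<mu> $ i \<ge> 0"
    and gm: "g xs = - (\<Sum>j\<in>\<Gamma>. \<mu> $ j *\<^sub>R A $ j)"
    using kkt[OF dirs] fr unfolding \<Gamma>_def by blast
  have msys: "\<forall>i\<in>\<Gamma>. (\<Sum>j\<in>\<Gamma>. (A $ i \<bullet> A $ j) * \<mu> $ j) = - (A $ i \<bullet> g xs)"
  proof
    fix i assume "i \<in> \<Gamma>"
    have "A $ i \<bullet> g xs = - (\<Sum>j\<in>\<Gamma>. (A $ i \<bullet> A $ j) * \<mu> $ j)"
      unfolding gm by (simp add: inner_sum_right mult.commute)
    then show "(\<Sum>j\<in>\<Gamma>. (A $ i \<bullet> A $ j) * \<mu> $ j) = - (A $ i \<bullet> g xs)" by simp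
  qed
  have ps: "pstar g A b xs = \<mu>"
    unfolding pstar_def \<Gamma>_def[symmetric]
  proof (rule the_equality)
    show "(\<forall>i. i \<notin> \<Gamma> \<longrightarrow> \<mu> $ i = 0) \<and> (\<forall>i\<in>\<Gamma>. (\<Sum>j\<in>\<Gamma>. (A $ i \<bullet> A $ j) * \<mu> $ j) = - (A $ i \<bullet> g xs))"
      using m0 msys by blast
  next
    fix p assume "(\<forall>i. i \<notin> \<Gamma> \<longrightarrow> p $ i = 0) \<and> (\<forall>i\<in>\<Gamma>. (\<Sum>j\<in>\<Gamma>. (A $ i \<bullet> A $ j) * p $ j) = - (A $ i \<bullet> g xs))"
    then show "p = \<mu>" using gram_unique[OF fr[folded \<Gamma>_def], of p "\<lambda>i. - (A $ i \<bullet> g xs)" \<mu>] m0 msys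
      by blast
  qed
  have T1: "ereal \<tau> < tau1 lam A b xs" and T2: "ereal \<tau> < tau2 g lam A b xs" using tt by auto
  have c1: "\<And>i. y $ i > 0 \<Longrightarrow> \<tau> * lam \<le> (y $ i)\<^sup>2 / 2"
  proof -
    fix i assume yi: "y $ i > 0"
    define M where "M = {(y $ j)\<^sup>2 / (2 * lam) | j. y $ j > 0}"
    have "M = (\<lambda>j. (y $ j)\<^sup>2 / (2 * lam)) ` {j. y $ j > 0}" unfolding M_def by auto
    then have finM: "finite M" by simp
    have iM: "(y $ i)\<^sup>2 / (2 * lam) \<in> M" using yi unfolding M_def by auto
    have "\<not> (\<forall>j. y $ j \<le> 0)" using yi by (meson not_le)
    then have "tau1 lam A b xs = ereal (Min M)" unfolding tau1_def M_def y_def Let_def by simp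
    then have "\<tau> < Min M" using T1 by simp
    also have "Min M \<le> (y $ i)\<^sup>2 / (2 * lam)" using finM iM by simp
    finally have "\<tau> < (y $ i)\<^sup>2 / (2 * lam)" .
    then have "\<tau> * (2 * lam) < (y $ i)\<^sup>2" using lam by (simp add: pos_less_divide_eq)
    then show "\<tau> * lam \<le> (y $ i)\<^sup>2 / 2" by simp
  qed
  have c2: "\<And>i. i \<in> \<Gamma> \<Longrightarrow> \<tau> * (\<mu> $ i)\<^sup>2 \<le> 2 * lam"
  proof -
    fix i assume i: "i \<in> \<Gamma>"
    show "\<tau> * (\<mu> $ i)\<^sup>2 \<le> 2 * lam"
    proof (cases "\<mu> $ i = 0")
      case True then show ?thesis using lam by simp
    next
      case False
      then have ne: "\<mu> \<noteq> 0" by auto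
      have Gne: "Gam A b xs \<noteq> {}" using i unfolding \<Gamma>_def by auto
      define N where "N = {\<bar>\<mu> $ j\<bar> | j. j \<in> Gam A b xs}"
      have "N = (\<lambda>j. \<bar>\<mu> $ j\<bar>) ` Gam A b xs" unfolding N_def by auto
      then have finN: "finite N" by simp
      have iN: "\<bar>\<mu> $ i\<bar> \<in> N" using i unfolding N_def \<Gamma>_def by auto
      have "tau2 g lam A b xs = ereal (2 * lam / (Max N)\<^sup>2)"
        unfolding tau2_def Let_def ps N_def using Gne ne by simp
      then have lt: "\<tau> < 2 * lam / (Max N)\<^sup>2" using T2 by simp
      have MN: "\<bar>\<mu> $ i\<bar> \<le> Max N" using finN iN by simp
      have Mp: "Max N > 0" using MN False by linarith
      have "\<tau> * (Max N)\<^sup>2 < 2 * lam" using lt Mp by (simp add: pos_less_divide_eq)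
      moreover have "(\<mu> $ i)\<^sup>2 \<le> (Max N)\<^sup>2"
        using MN power_mono[of "\<bar>\<mu> $ i\<bar>" "Max N" 2] by simp
      then have "\<tau> * (\<mu> $ i)\<^sup>2 \<le> \<tau> * (Max N)\<^sup>2" using tau by (simp add: mult_left_mono)
      ultimately show ?thesis by linarith
    qed
  qed
  show ?thesis unfolding Pstat_def
  proof (intro exI conjI)
    have "transpose A *v \<mu> = (\<Sum>i\<in>UNIV. \<mu> $ i *\<^sub>R A $ i)"
      by (simp add: vector_matrix_mult_def vec_eq_iff sum_component mult.commute)
    also have "\<dots> = (\<Sum>i\<in>\<Gamma>. \<mu> $ i *\<^sub>R A $ i)"
      by (rule sum.mono_neutral_right) (use m0 in auto)
    finally show "g xs + transpose A *v \<mu> = 0" using gm by simp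
  next
    show "A *v xs + b \<in> Prox (\<tau> * lam) (A *v xs + b + \<tau> *\<^sub>R \<mu>)"
      unfolding y_def[symmetric]
    proof (rule prox_suff)
      fix i s
      have c: "(y $ i < 0 \<and> \<mu> $ i = 0) \<or> (y $ i > 0 \<and> \<mu> $ i = 0 \<and> \<tau> * lam \<le> (y $ i)\<^sup>2 / 2)
          \<or> (y $ i = 0 \<and> \<mu> $ i \<ge> 0 \<and> \<tau> * (\<mu> $ i)\<^sup>2 \<le> 2 * lam)"
      proof (cases "y $ i" "0::real" rule: linorder_cases)
        case less then show ?thesis using m0 G\<Gamma>[of i] by auto
      next
        case equal then show ?thesis using mpos c2 G\<Gamma>[of i] by auto
      next
        case greater then show ?thesis using m0 c1 G\<Gamma>[of i] by auto
      qed
      show "(1/2) * (y $ i - (y + \<tau> *\<^sub>R \<mu>) $ i)\<^sup>2 + \<tau> * lam * (if y $ i > 0 then 1 else 0)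
         \<le> (1/2) * (s - (y + \<tau> *\<^sub>R \<mu>) $ i)\<^sup>2 + \<tau> * lam * (if s > 0 then 1 else 0)"
        using coord_ok[OF tau lam c, of s] by simp
    qed
  qed
qed


theorem theorem3p1:
  fixes f :: "real^'n \<Rightarrow> real" and g :: "real^'n \<Rightarrow> real^'n"
    and g' :: "real^'n \<Rightarrow> real^'n \<Rightarrow> real^'n"
    and lam :: real and A :: "real^'n^'m" and b :: "real^'m"
  assumes grad: "\<And>x. (f has_derivative (\<lambda>h. g x \<bullet> h)) (at x)"
    and hess: "\<And>x. (g has_derivative g' x) (at x)"
    and hess_cont: "continuous_on UNIV (\<lambda>x. matrix (g' x))"
    and lam: "lam > 0"
  shows
   "(\<forall>xs. local_minimizer (objP f lam A b) xs \<and> full_row_rank_on A (Gam A b xs) \<longrightarrow>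
        (\<forall>\<tau>. 0 < \<tau> \<and> ereal \<tau> < min (tau1 lam A b xs) (tau2 g lam A b xs) \<longrightarrow> Pstat g lam A b \<tau> xs))
  \<and> (\<forall>xs \<tau>. \<tau> > 0 \<and> Pstat g lam A b \<tau> xs \<and> (\<exists>\<delta>>0. convex_on (ball xs \<delta>) f)
        \<longrightarrow> local_minimizer (objP f lam A b) xs)
  \<and> (\<forall>cf xs \<tau>. cf > 0 \<and>
        (\<forall>x x'. f x \<ge> f x' + g x' \<bullet> (x - x') + cf / 2 * (norm (x - x'))\<^sup>2) \<and>
        \<tau> \<ge> (onorm (\<lambda>x. A *v x))\<^sup>2 / cf \<and> Pstat g lam A b \<tau> xs
        \<longrightarrow> global_minimizer (objP f lam A b) xs)"
proof (intro conjI allI impI)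
  fix xs \<tau>
  assume a: "local_minimizer (objP f lam A b) xs \<and> full_row_rank_on A (Gam A b xs)"
    and t: "0 < \<tau> \<and> ereal \<tau> < min (tau1 lam A b xs) (tau2 g lam A b xs)"
  show "Pstat g lam A b \<tau> xs"
    using part1[where f=f and g=g, OF grad lam] a t by blast
next
  fix xs \<tau>
  assume a: "\<tau> > 0 \<and> Pstat g lam A b \<tau> xs \<and> (\<exists>\<delta>>0. convex_on (ball xs \<delta>) f)"
  then obtain \<delta> where "\<delta> > 0" "convex_on (ball xs \<delta>) f" by blast
  then show "local_minimizer (objP f lam A b) xs"
    using part2[where f=f and g=g, OF grad lam] a by blast
next
  fix cf xs \<tau>
  assume a: "cf > 0 \<and>
        (\<forall>x x'. f x \<ge> f x' + g x' \<bullet> (x - x') + cf / 2 * (norm (x - x'))\<^sup>2) \<and>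
        \<tau> \<ge> (onorm (\<lambda>x. A *v x))\<^sup>2 / cf \<and> Pstat g lam A b \<tau> xs"
  then show "global_minimizer (objP f lam A b) xs"
    using part3[OF lam] by blast
qed

end
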